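(* Assume $\chi$ is weakly generic, let $\sigma=\sigma_{a,b}$ be a Serre weight with $\mathcal{S}(\chi_1,\chi_2,\sigma)\neq\varnothing$, let $(J,x)$ be its maximal element, and let $s,t,r,\mathcal{I}_\tau$ be as in the context. Then for every $\tau\in\Sigma$: $t_\tau\in\mathcal{I}_\tau$ if and only if $t_\tau<r_\tau$.
   Context: Let $p$ be a prime, $K/\mathbf{Q}_p$ finite with residue field $k$, residue degree $f$, ramification index $e$; $I_K$ inertia. Fix $\varpi\in\overline{K}$ with $\varpi^{p^f-1}$ a uniformiser; $\omega\colon G_K\to k^\times$ sends $g$ to the reduction of $g(\varpi)/\varpi$. $\Sigma=\mathrm{Hom}_{\mathbf{F}_p}(k,\overline{\mathbf{F}}_p)$, $\varphi(x)=x^p$, $\omega_\tau=\tau\circ\omega$, $\Omega_{\tau,a}=\sum_{i=0}^{f-1}p^ia_{\tau\circ\varphi^i}$. $\chi_1,\chi_2\colon G_K\to\overline{\mathbf{F}}_p^\times$ continuous, $\chi=\chi_1\chi_2^{-1}=\psi\prod_\tau\omega_\tau^{n_\tau}$, $\psi$ unramified, $n_\tau\in[1,p]$, some $n_\tau<p$. Weakly generic: $n_\tau\in[e,p-e]$ for all $\tau$. Serre weight $\sigma_{a,b}=\bigotimes_\tau(\det^{b_\tau}\otimes\mathrm{Sym}^{a_\tau-b_\tau}k^2)\otimes_{k,\tau}\overline{\mathbf{F}}_p$, $a_\tau-b_\tau\in[0,p-1]$; $r_\tau=a_\tau-b_\tau+1$. $\mathcal{S}(\chi_1,\chi_2,\sigma)$: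 pairs $(J,x)$, $J\subseteq\Sigma$, $x_\tau\in[0,e-1]$, with $\chi_1|_{I_K}=\prod_{\tau\in J}\omega_\tau^{a_\tau+1+x_\tau}\prod_{\tau\notin J}\omega_\tau^{b_\tau+x_\tau}$ and $\chi_2|_{I_K}=\prod_{\tau\notin J}\omega_\tau^{a_\tau+e-x_\tau}\prod_{\tau\in J}\omega_\tau^{b_\tau+e-1-x_\tau}$. $s=s(J,x)$: $s_\tau=r_\tau+x_\tau$ if $\tau\in J$, $s_\tau=x_\tau$ if $\tau\notin J$. Order: $(J,x)\preceq(J',x')$ iff $\Omega_{\tau,s(J',x')-s(J,x)}\in(p^f-1)\mathbf{Z}_{\ge0}$ for all $\tau$; a non-empty $\mathcal{S}$ has a unique maximal element. For the maximal $(J,x)$: $s=s(J,x)$, $t_\tau=a_\tau-b_\tau+e-s_\tau$, and $\mathcal{I}_\tau=[0,s_\tau-1]$ if $\tau\notin J$, $\mathcal{I}_\tau=\{t_\tau\}\cup[r_\tau,s_\tau-1]$ if $\tau\in J$ (integer intervals, empty if the upper end is below the lower end). *)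

theory Defs
  imports Main "HOL-Number_Theory.Cong"
begin

(* Sigma = Hom(k, Fpbar) is indexed by {..<f}: index i stands for tau0 o phi^i for a fixed
   embedding tau0, so tau o phi^j corresponds to (i + j) mod f.
   Functions indexed by Sigma are functions on nat; only values on {..<f} matter.
   Characters of I_K of the form prod_tau omega_tau^(c_tau) equal omega_{tau0}^(Omega_{tau0,c});
   a character chi_i of G_K restricted to I_K is recorded by an integer exponent c_i with
   chi_i|_{I_K} = omega_{tau0}^{c_i}; equality of such characters is congruence mod p^f - 1. *)

definition Omega :: "nat \<Rightarrow> nat \<Rightarrow> nat \<Rightarrow> (nat \<Rightarrow> int) \<Rightarrow> int" where
  "Omega p f \<tau> a = (\<Sum>i<f. int p ^ i * a ((\<tau> + i) mod f))"

definition rr :: "(nat \<Rightarrow> int) \<Rightarrow> (nat \<Rightarrow> int) \<Rightarrow> nat \<Rightarrow> int" where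
  "rr a b \<tau> = a \<tau> - b \<tau> + 1"

definition ss :: "(nat \<Rightarrow> int) \<Rightarrow> (nat \<Rightarrow> int) \<Rightarrow> nat set \<Rightarrow> (nat \<Rightarrow> nat) \<Rightarrow> nat \<Rightarrow> int" where
  "ss a b J x \<tau> = (if \<tau> \<in> J then rr a b \<tau> + int (x \<tau>) else int (x \<tau>))"

definition tt :: "nat \<Rightarrow> (nat \<Rightarrow> int) \<Rightarrow> (nat \<Rightarrow> int) \<Rightarrow> nat set \<Rightarrow> (nat \<Rightarrow> nat) \<Rightarrow> nat \<Rightarrow> int" where
  "tt e a b J x \<tau> = a \<tau> - b \<tau> + int e - ss a b J x \<tau>"

definition II :: "nat \<Rightarrow> (nat \<Rightarrow> int) \<Rightarrow> (nat \<Rightarrow> int) \<Rightarrow> nat set \<Rightarrow> (nat \<Rightarrow> nat) \<Rightarrow> nat \<Rightarrow> int set" where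
  "II e a b J x \<tau> =
     (if \<tau> \<notin> J then {0 .. ss a b J x \<tau> - 1}
      else {tt e a b J x \<tau>} \<union> {rr a b \<tau> .. ss a b J x \<tau> - 1})"

(* membership (J,x) in S(chi_1,chi_2,sigma_{a,b}); c1, c2 are the exponents of chi_1|_{I_K},
   chi_2|_{I_K} with respect to omega_{tau0}. x is extensional (0 outside Sigma). *)
definition inS :: "nat \<Rightarrow> nat \<Rightarrow> nat \<Rightarrow> (nat \<Rightarrow> int) \<Rightarrow> (nat \<Rightarrow> int) \<Rightarrow> int \<Rightarrow> int
                   \<Rightarrow> nat set \<Rightarrow> (nat \<Rightarrow> nat) \<Rightarrow> bool" where
  "inS p f e a b c1 c2 J x \<longleftrightarrow>
     J \<subseteq> {..<f} \<and> (\<forall>\<tau><f. x \<tau> \<le> e - 1) \<and> (\<forall>\<tau>. f \<le> \<tau> \<longrightarrow> x \<tau> = 0) \<and>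
     [c1 = Omega p f 0 (\<lambda>\<tau>. if \<tau> \<in> J then a \<tau> + 1 + int (x \<tau>) else b \<tau> + int (x \<tau>))]
        (mod (int p ^ f - 1)) \<and>
     [c2 = Omega p f 0 (\<lambda>\<tau>. if \<tau> \<notin> J then a \<tau> + int e - int (x \<tau>)
                               else b \<tau> + int e - 1 - int (x \<tau>))]
        (mod (int p ^ f - 1))"

definition Sle :: "nat \<Rightarrow> nat \<Rightarrow> (nat \<Rightarrow> int) \<Rightarrow> (nat \<Rightarrow> int) \<Rightarrow> nat set \<Rightarrow> (nat \<Rightarrow> nat)
                   \<Rightarrow> nat set \<Rightarrow> (nat \<Rightarrow> nat) \<Rightarrow> bool" where
  "Sle p f a b J x J' x' \<longleftrightarrow>
     (\<forall>\<tau><f. \<exists>m::nat. Omega p f \<tau> (\<lambda>i. ss a b J' x' i - ss a b J x i) = (int p ^ f - 1) * int m)"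

end

theory Submission
  imports Defs
begin

theorem proposition5p10:
  fixes p f e :: nat and n :: "nat \<Rightarrow> int" and c1 c2 :: int
    and a b :: "nat \<Rightarrow> int" and J :: "nat set" and x :: "nat \<Rightarrow> nat"
  assumes "prime p" and "1 \<le> f" and "1 \<le> e"
    and n_range: "\<forall>\<tau><f. 1 \<le> n \<tau> \<and> n \<tau> \<le> int p"
    and n_some: "\<exists>\<tau><f. n \<tau> < int p"
    and chi: "[c1 - c2 = Omega p f 0 n] (mod (int p ^ f - 1))"
    and weakly_generic: "\<forall>\<tau><f. int e \<le> n \<tau> \<and> n \<tau> \<le> int p - int e"
    and serre: "\<forall>\<tau><f. 0 \<le> a \<tau> - b \<tau> \<and> a \<tau> - b \<tau> \<le> int p - 1"
    and Jx_in: "inS p f e a b c1 c2 J x"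
    and Jx_max: "\<forall>J' x'. inS p f e a b c1 c2 J' x' \<longrightarrow> Sle p f a b J x J' x'
                   \<longrightarrow> (J', x') = (J, x)"
  shows "\<forall>\<tau><f. (tt e a b J x \<tau> \<in> II e a b J x \<tau> \<longleftrightarrow> tt e a b J x \<tau> < rr a b \<tau>)"
proof (intro allI impI)
  fix \<tau> assume tau: "\<tau> < f"
  from Jx_in have JF: "J \<subseteq> {..<f}" and xb: "\<forall>\<tau><f. x \<tau> \<le> e - 1"
    and x0: "\<forall>\<tau>. f \<le> \<tau> \<longrightarrow> x \<tau> = 0"
    and C1: "[c1 = Omega p f 0 (\<lambda>\<tau>. if \<tau> \<in> J then a \<tau> + 1 + int (x \<tau>) else b \<tau> + int (x \<tau>))]
        (mod (int p ^ f - 1))"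
    and C2: "[c2 = Omega p f 0 (\<lambda>\<tau>. if \<tau> \<notin> J then a \<tau> + int e - int (x \<tau>)
                               else b \<tau> + int e - 1 - int (x \<tau>))]
        (mod (int p ^ f - 1))"
    unfolding inS_def by auto
  have ab: "0 \<le> a \<tau> - b \<tau>" using serre tau by auto
  have xt: "int (x \<tau>) \<le> int e - 1" using xb tau \<open>1 \<le> e\<close> by fastforce
  have alt: "False" if J'F: "J' \<subseteq> {..<f}" and x'b: "\<forall>\<tau><f. x' \<tau> \<le> e - 1"
    and x'0: "\<forall>\<tau>. f \<le> \<tau> \<longrightarrow> x' \<tau> = 0" and ne: "J' \<noteq> J"
    and f1: "(\<lambda>\<tau>. if \<tau> \<in> J' then a \<tau> + 1 + int (x' \<tau>) else b \<tau> + int (x' \<tau>))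
           = (\<lambda>\<tau>. if \<tau> \<in> J then a \<tau> + 1 + int (x \<tau>) else b \<tau> + int (x \<tau>))"
    and f2: "(\<lambda>\<tau>. if \<tau> \<notin> J' then a \<tau> + int e - int (x' \<tau>)
                               else b \<tau> + int e - 1 - int (x' \<tau>))
           = (\<lambda>\<tau>. if \<tau> \<notin> J then a \<tau> + int e - int (x \<tau>)
                               else b \<tau> + int e - 1 - int (x \<tau>))"
    and f3: "ss a b J' x' = ss a b J x" for J' x'
  proof -
    have "inS p f e a b c1 c2 J' x'"
      unfolding inS_def f1 f2 using J'F x'b x'0 C1 C2 by blast
    moreover have "Sle p f a b J x J' x'"
      unfolding Sle_def f3 by (auto simp: Omega_def)
    ultimately show False using Jx_max ne by blast
  qed
  show "tt e a b J x \<tau> \<in> II e a b J x \<tau> \<longleftrightarrow> tt e a b J x \<tau> < rr a b \<tau>"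
  proof (cases "\<tau> \<in> J")
    case True
    have "\<not> (int (x \<tau>) + rr a b \<tau> \<le> int e - 1)"
    proof
      assume h: "int (x \<tau>) + rr a b \<tau> \<le> int e - 1"
      define x' where "x' = x(\<tau> := nat (rr a b \<tau> + int (x \<tau>)))"
      define J' where "J' = J - {\<tau>}"
      show False
      proof (rule alt[of J' x'])
        show "J' \<subseteq> {..<f}" using JF J'_def by auto
        show "\<forall>\<tau><f. x' \<tau> \<le> e - 1" using xb h ab unfolding x'_def rr_def by auto
        show "\<forall>\<tau>. f \<le> \<tau> \<longrightarrow> x' \<tau> = 0" using x0 tau unfolding x'_def by auto
        show "J' \<noteq> J" using True J'_def by auto
        show "(\<lambda>\<tau>. if \<tau> \<in> J' then a \<tau> + 1 + int (x' \<tau>) else b \<tau> + int (x' \<tau>))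
           = (\<lambda>\<tau>. if \<tau> \<in> J then a \<tau> + 1 + int (x \<tau>) else b \<tau> + int (x \<tau>))"
          using True ab by (auto simp: fun_eq_iff J'_def x'_def rr_def)
        show "(\<lambda>\<tau>. if \<tau> \<notin> J' then a \<tau> + int e - int (x' \<tau>)
                               else b \<tau> + int e - 1 - int (x' \<tau>))
           = (\<lambda>\<tau>. if \<tau> \<notin> J then a \<tau> + int e - int (x \<tau>)
                               else b \<tau> + int e - 1 - int (x \<tau>))"
          using True ab by (auto simp: fun_eq_iff J'_def x'_def rr_def)
        show "ss a b J' x' = ss a b J x"
          using True ab by (auto simp: fun_eq_iff J'_def x'_def rr_def ss_def)
      qed
    qed
    then show ?thesis using True by (auto simp: tt_def II_def ss_def rr_def)
  next
    case False
    have "\<not> (rr a b \<tau> \<le> int (x \<tau>))"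
    proof
      assume h: "rr a b \<tau> \<le> int (x \<tau>)"
      define x' where "x' = x(\<tau> := nat (int (x \<tau>) - rr a b \<tau>))"
      define J' where "J' = insert \<tau> J"
      show False
      proof (rule alt[of J' x'])
        show "J' \<subseteq> {..<f}" using JF J'_def tau by auto
        show "\<forall>\<tau><f. x' \<tau> \<le> e - 1" using xb h ab unfolding x'_def rr_def by auto
        show "\<forall>\<tau>. f \<le> \<tau> \<longrightarrow> x' \<tau> = 0" using x0 tau unfolding x'_def by auto
        show "J' \<noteq> J" using False J'_def by auto
        show "(\<lambda>\<tau>. if \<tau> \<in> J' then a \<tau> + 1 + int (x' \<tau>) else b \<tau> + int (x' \<tau>))
           = (\<lambda>\<tau>. if \<tau> \<in> J then a \<tau> + 1 + int (x \<tau>) else b \<tau> + int (x \<tau>))"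
          using False h by (auto simp: fun_eq_iff J'_def x'_def rr_def)
        show "(\<lambda>\<tau>. if \<tau> \<notin> J' then a \<tau> + int e - int (x' \<tau>)
                               else b \<tau> + int e - 1 - int (x' \<tau>))
           = (\<lambda>\<tau>. if \<tau> \<notin> J then a \<tau> + int e - int (x \<tau>)
                               else b \<tau> + int e - 1 - int (x \<tau>))"
          using False h by (auto simp: fun_eq_iff J'_def x'_def rr_def)
        show "ss a b J' x' = ss a b J x"
          using False h by (auto simp: fun_eq_iff J'_def x'_def rr_def ss_def)
      qed
    qed
    then show ?thesis using False xt by (auto simp: tt_def II_def ss_def rr_def)
  qed
qed

end
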